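(* Let $m_1,\ldots,m_n\ge 2$ be integers, let $\mathcal{B}\subseteq\{0,1\}^n$, and let $G=\mathrm{NEPS}(K_{m_1},\ldots,K_{m_n};\mathcal{B})$, where $K_m$ is the complete graph on $m$ vertices. Then for all vertices $v,w\in V(G)$ and every integer $r\ge0$, $$w_{G}(r,v,w)=\sum_{(\beta_1,\ldots,\beta_{r})\in \mathcal{B}^{r}}\ \prod_{t=1}^{n} a_{t},$$ where $\beta_\ell=(\beta_{\ell1},\ldots,\beta_{\ell n})$, $\ell_t:=\beta_{1t}+\cdots+\beta_{rt}$, and $$a_{t}=\begin{cases}\frac{m_t-1}{m_t}\big((m_{t}-1)^{\ell_t-1}-(-1)^{\ell_t-1}\big) & \text{if } \pi_{t}(v)=\pi_t(w),\\[1mm] \frac{1}{m_t}\big((m_{t}-1)^{\ell_t}-(-1)^{\ell_t}\big) & \text{if } \pi_{t}(v)\neq\pi_t(w),\end{cases}$$ with $\pi_t$ the projection onto the $t$-th coordinate.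
   Context: Given $\mathcal{B}\subseteq\{0,1\}^n$ and graphs $G_1,\ldots,G_n$, $\mathrm{NEPS}(G_1,\ldots,G_n;\mathcal{B})$ is the graph with vertex set $V(G_1)\times\cdots\times V(G_n)$, in which $(x_1,\ldots,x_n)$ and $(y_1,\ldots,y_n)$ are adjacent iff there is $(\alpha_1,\ldots,\alpha_n)\in\mathcal{B}$ such that $x_i=y_i$ whenever $\alpha_i=0$, and $x_i,y_i$ are distinct and adjacent in $G_i$ whenever $\alpha_i=1$. $w_G(r,v,w)$ is the number of walks of length $r$ from $v$ to $w$ in $G$ (with $w_G(0,v,w)=1$ if $v=w$, $0$ otherwise). *)

theory Defs
  imports Complex_Main
begin

text \<open>Indices of the NEPS factors are 0-based: t ranges over {0..<n}.
  Vertices of the NEPS are lists of length n; elements of the basis B are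
  0/1-lists of length n.\<close>

definition neps_verts :: "nat \<Rightarrow> (nat \<Rightarrow> 'a set) \<Rightarrow> 'a list set" where
  "neps_verts n V = {x. length x = n \<and> (\<forall>i<n. x ! i \<in> V i)}"

definition neps_adj :: "nat \<Rightarrow> (nat \<Rightarrow> 'a \<Rightarrow> 'a \<Rightarrow> bool) \<Rightarrow> nat list set
    \<Rightarrow> 'a list \<Rightarrow> 'a list \<Rightarrow> bool" where
  "neps_adj n E B x y =
     (\<exists>\<alpha>\<in>B. \<forall>i<n. (\<alpha> ! i = 0 \<longrightarrow> x ! i = y ! i) \<and>
                     (\<alpha> ! i = 1 \<longrightarrow> x ! i \<noteq> y ! i \<and> E i (x ! i) (y ! i)))"

definition K_verts :: "nat \<Rightarrow> nat set" where
  "K_verts m = {0..<m}"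

definition K_adj :: "nat \<Rightarrow> nat \<Rightarrow> nat \<Rightarrow> bool" where
  "K_adj m a b = (a < m \<and> b < m \<and> a \<noteq> b)"

definition walks :: "'a set \<Rightarrow> ('a \<Rightarrow> 'a \<Rightarrow> bool) \<Rightarrow> nat \<Rightarrow> 'a \<Rightarrow> 'a \<Rightarrow> nat" where
  "walks V adj r v w = card {p. length p = Suc r \<and> set p \<subseteq> V \<and> p ! 0 = v \<and> p ! r = w
                              \<and> (\<forall>i<r. adj (p ! i) (p ! Suc i))}"

end

theory Submission
  imports Defs
begin


definition aa :: "nat \<Rightarrow> bool \<Rightarrow> nat \<Rightarrow> real" where
  "aa m s k = (let l = int k; mt = real m in
            if s
            then (mt - 1) / mt * ((mt - 1) powi (l - 1) - (-1) powi (l - 1))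
            else 1 / mt * ((mt - 1) powi l - (-1) powi l))"

lemma aa_T0: "m \<ge> 2 \<Longrightarrow> aa m True 0 = 1"
proof -
  assume m: "m \<ge> 2"
  hence h: "real m - 1 \<noteq> 0" "real m \<noteq> 0" by auto
  have "aa m True 0 = (real m - 1) / real m * (1 / (real m - 1) + 1)"
    by (simp add: aa_def Let_def power_int_minus inverse_eq_divide)
  also have "\<dots> = 1" using h by (simp add: field_simps)
  finally show ?thesis .
qed

lemma aa_F0: "aa m False 0 = 0"
  by (simp add: aa_def)

lemma aa_TS: "aa m True (Suc k) = (real m - 1) / real m * ((real m - 1) ^ k - (-1) ^ k)"
  by (simp add: aa_def power_int_def Let_def)

lemma aa_F: "aa m False k = 1 / real m * ((real m - 1) ^ k - (-1) ^ k)"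
  by (simp add: aa_def power_int_def Let_def)

lemma aa_rec1: "aa m True (Suc k) = (real m - 1) * aa m False k"
  by (simp add: aa_TS aa_F)

lemma aa_rec2: assumes "m \<ge> 2" shows "aa m False (Suc k) = aa m True k + (real m - 2) * aa m False k"
proof (cases k)
  case 0 thus ?thesis using assms by (simp add: aa_T0 aa_F0 aa_F)
next
  case (Suc j)
  have "real m \<noteq> 0" using assms by auto
  then show ?thesis unfolding Suc aa_TS aa_F
    by (simp add: field_simps power_Suc)
qed

definition patt :: "nat \<Rightarrow> nat \<Rightarrow> nat \<Rightarrow> nat \<Rightarrow> bool" where
  "patt m b x y = ((b = 0 \<longrightarrow> x = y) \<and> (b = 1 \<longrightarrow> x \<noteq> y \<and> K_adj m x y))"

lemma scalar_step:
  assumes m: "m \<ge> 2" and b: "b \<in> {0,1}" and a: "a < m" and y: "y < m"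
  shows "(\<Sum>x\<in>{0..<m}. if patt m b x y then aa m (a = x) k else 0) = aa m (a = y) (k + b)"
proof (cases "b = 0")
  case True
  then show ?thesis using y by (simp add: patt_def)
next
  case False
  hence b1: "b = 1" using b by auto
  have "(\<Sum>x\<in>{0..<m}. if patt m b x y then aa m (a = x) k else 0)
      = (\<Sum>x\<in>{0..<m} - {y}. aa m (a = x) k)"
    using y by (simp add: b1 patt_def K_adj_def sum.If_cases) (rule sum.cong; auto)
  also have "\<dots> = aa m (a = y) (Suc k)"
  proof (cases "a = y")
    case True
    have "(\<Sum>x\<in>{0..<m} - {y}. aa m (a = x) k) = (\<Sum>x\<in>{0..<m} - {y}. aa m False k)"
      using True by (intro sum.cong) auto
    also have "\<dots> = (real m - 1) * aa m False k" using y m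
      by (simp add: of_nat_diff)
    finally show ?thesis using True by (simp add: aa_rec1)
  next
    case False
    have "(\<Sum>x\<in>{0..<m} - {y}. aa m (a = x) k) = aa m True k + (\<Sum>x\<in>{0..<m} - {y} - {a}. aa m (a = x) k)"
      using False a by (subst sum.remove[of _ a]) auto
    also have "(\<Sum>x\<in>{0..<m} - {y} - {a}. aa m (a = x) k) = (\<Sum>x\<in>{0..<m} - {y} - {a}. aa m False k)"
      by (intro sum.cong) auto
    also have "\<dots> = (real m - 2) * aa m False k" using y m a False
      by (simp add: of_nat_diff card_Diff_subset)
    finally show ?thesis using False m by (simp add: aa_rec2)
  qed
  finally show ?thesis using b1 by simp
qed



definition WS :: "'a set \<Rightarrow> ('a \<Rightarrow> 'a \<Rightarrow> bool) \<Rightarrow> nat \<Rightarrow> 'a \<Rightarrow> 'a \<Rightarrow> 'a list set" where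
  "WS V adj r v w = {p. length p = Suc r \<and> set p \<subseteq> V \<and> p ! 0 = v \<and> p ! r = w
                              \<and> (\<forall>i<r. adj (p ! i) (p ! Suc i))}"

lemma walks_WS: "walks V adj r v w = card (WS V adj r v w)"
  by (simp add: walks_def WS_def)

lemma WS_finite: "finite V \<Longrightarrow> finite (WS V adj r v w)"
  by (rule finite_subset[OF _ finite_lists_length_eq[of V "Suc r"]]) (auto simp: WS_def)

lemma walks_0: "walks V adj 0 v w = (if v = w \<and> v \<in> V then 1 else 0)"
proof -
  have "WS V adj 0 v w = (if v = w \<and> v \<in> V then {[v]} else {})"
    by (auto simp: WS_def length_Suc_conv)
  thus ?thesis by (auto simp: walks_WS)
qed

lemma WS_Suc: assumes "w \<in> V"
  shows "WS V adj (Suc r) v w = (\<Union>u\<in>{u\<in>V. adj u w}. (\<lambda>q. q @ [w]) ` WS V adj r v u)"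
proof (intro set_eqI iffI)
  fix p assume p: "p \<in> WS V adj (Suc r) v w"
  then obtain q y where q: "p = q @ [y]" "length q = Suc r"
    by (auto simp: WS_def length_Suc_conv_rev)
  have y: "y = w" using p q by (auto simp: WS_def nth_append)
  have a: "q ! i = p ! i" if "i < Suc r" for i using q that by (simp add: nth_append)
  have "\<forall>i<Suc r. adj (p ! i) (p ! Suc i)" using p by (simp add: WS_def)
  hence "\<forall>i<r. adj (q ! i) (q ! Suc i)" using a by auto
  hence "q \<in> WS V adj r v (q ! r)" using p q a[of 0]
    by (auto simp: WS_def)
  moreover have "q ! r \<in> V" "adj (q ! r) w" using p q y
    by (auto simp: WS_def nth_append)
  ultimately show "p \<in> (\<Union>u\<in>{u\<in>V. adj u w}. (\<lambda>q. q @ [w]) ` WS V adj r v u)"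
    using q y by blast
next
  fix p assume "p \<in> (\<Union>u\<in>{u\<in>V. adj u w}. (\<lambda>q. q @ [w]) ` WS V adj r v u)"
  then obtain u q where u: "u \<in> V" "adj u w" and q: "q \<in> WS V adj r v u" and p: "p = q @ [w]"
    by auto
  show "p \<in> WS V adj (Suc r) v w"
    unfolding WS_def
  proof (intro CollectI conjI allI impI)
    show "length p = Suc (Suc r)" "set p \<subseteq> V" "p ! 0 = v" "p ! Suc r = w"
      using q p assms by (auto simp: WS_def nth_append)
    fix i assume i: "i < Suc r"
    show "adj (p ! i) (p ! Suc i)"
    proof (cases "i < r")
      case True thus ?thesis using q p by (auto simp: WS_def nth_append)
    next
      case False
      hence "i = r" using i by auto
      thus ?thesis using q p u by (auto simp: WS_def nth_append)
    qed
  qed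
qed

lemma walks_Suc: assumes "finite V" "w \<in> V"
  shows "real (walks V adj (Suc r) v w) = (\<Sum>u\<in>V. if adj u w then real (walks V adj r v u) else 0)"
proof -
  have "card (WS V adj (Suc r) v w) = (\<Sum>u\<in>{u\<in>V. adj u w}. card ((\<lambda>q. q @ [w]) ` WS V adj r v u))"
    unfolding WS_Suc[OF assms(2)]
    apply (rule card_UN_disjoint)
    subgoal using assms by simp
    subgoal using WS_finite[OF assms(1)] by blast
    subgoal by (auto simp: WS_def nth_append)
    done
  also have "\<dots> = (\<Sum>u\<in>{u\<in>V. adj u w}. card (WS V adj r v u))"
    by (intro sum.cong refl card_image) (auto simp: inj_on_def)
  finally show ?thesis
    by (simp add: walks_WS sum.inter_filter[symmetric] assms)
qed

lemma neps_verts_Suc: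
  "neps_verts (Suc n) Vs = (\<lambda>(x, xs). x # xs) ` (Vs 0 \<times> neps_verts n (\<lambda>i. Vs (Suc i)))"
proof (intro set_eqI iffI)
  fix u assume "u \<in> neps_verts (Suc n) Vs"
  then obtain x xs where "u = x # xs" "length xs = n" "\<forall>i<Suc n. u ! i \<in> Vs i"
    by (auto simp: neps_verts_def length_Suc_conv)
  thus "u \<in> (\<lambda>(x, xs). x # xs) ` (Vs 0 \<times> neps_verts n (\<lambda>i. Vs (Suc i)))"
    by (force simp: neps_verts_def)
next
  fix u assume "u \<in> (\<lambda>(x, xs). x # xs) ` (Vs 0 \<times> neps_verts n (\<lambda>i. Vs (Suc i)))"
  thus "u \<in> neps_verts (Suc n) Vs"
    by (auto simp: neps_verts_def nth_Cons split: nat.splits)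
qed

lemma sum_prod_neps:
  fixes g :: "nat \<Rightarrow> 'a \<Rightarrow> real"
  shows "(\<Sum>u\<in>neps_verts n Vs. \<Prod>t<n. g t (u ! t)) = (\<Prod>t<n. \<Sum>x\<in>Vs t. g t x)"
proof (induction n arbitrary: Vs g)
  case 0
  have "neps_verts 0 Vs = {[]}" by (auto simp: neps_verts_def)
  thus ?case by simp
next
  case (Suc n)
  have "(\<Sum>u\<in>neps_verts (Suc n) Vs. \<Prod>t<Suc n. g t (u ! t))
     = (\<Sum>p\<in>Vs 0 \<times> neps_verts n (\<lambda>i. Vs (Suc i)). \<Prod>t<Suc n. g t ((fst p # snd p) ! t))"
    unfolding neps_verts_Suc
    by (subst sum.reindex) (auto simp: inj_on_def case_prod_beta)
  also have "\<dots> = (\<Sum>x\<in>Vs 0. \<Sum>xs\<in>neps_verts n (\<lambda>i. Vs (Suc i)). g 0 x * (\<Prod>t<n. g (Suc t) (xs ! t)))"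
    unfolding prod.lessThan_Suc_shift by (simp add: sum.cartesian_product case_prod_beta)
  also have "\<dots> = (\<Sum>x\<in>Vs 0. g 0 x) * (\<Sum>xs\<in>neps_verts n (\<lambda>i. Vs (Suc i)). \<Prod>t<n. g (Suc t) (xs ! t))"
    by (simp add: sum_product)
  also have "\<dots> = (\<Prod>t<Suc n. \<Sum>x\<in>Vs t. g t x)"
    using Suc.IH[of "\<lambda>t. g (Suc t)" "\<lambda>i. Vs (Suc i)"] unfolding prod.lessThan_Suc_shift by simp
  finally show ?case .
qed



lemma prod_if_all:
  fixes f :: "nat \<Rightarrow> real"
  shows "(if \<forall>t<n. P t then \<Prod>t<n. f t else 0) = (\<Prod>t<n. if P t then f t else 0)"
proof (cases "\<forall>t<n. P t")
  case True thus ?thesis by (auto intro: prod.cong)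
next
  case False
  then obtain t where "t < n" "\<not> P t" by auto
  hence "\<exists>a\<in>{..<n}. (if P a then f a else 0) = 0" by auto
  hence "(\<Prod>t<n. if P t then f t else 0) = 0" by (simp add: prod_zero)
  thus ?thesis using False by simp
qed

lemma sum_if_const: "(\<Sum>x\<in>A. if P then f x else (0::real)) = (if P then sum f A else 0)"
  by simp

lemma sum_unique_beta:
  fixes X :: real
  assumes fin: "finite B" and uniq: "\<And>\<beta> \<beta>'. \<beta> \<in> B \<Longrightarrow> \<beta>' \<in> B \<Longrightarrow> P \<beta> \<Longrightarrow> P \<beta>' \<Longrightarrow> \<beta> = \<beta>'"
  shows "(\<Sum>\<beta>\<in>B. if P \<beta> then X else 0) = (if \<exists>\<beta>\<in>B. P \<beta> then X else 0)"
proof (cases "\<exists>\<beta>\<in>B. P \<beta>")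
  case True
  then obtain b where b: "b \<in> B" "P b" by auto
  have "(\<Sum>\<beta>\<in>B. if P \<beta> then X else 0) = (\<Sum>\<beta>\<in>B. if \<beta> = b then X else 0)"
    using b uniq by (intro sum.cong) auto
  also have "\<dots> = X" using b fin by simp
  finally show ?thesis using True by simp
next
  case False thus ?thesis by auto
qed

lemma main_ind:
  fixes n :: nat and m :: "nat \<Rightarrow> nat" and B :: "nat list set"
    and v :: "nat list"
  assumes m_ge: "\<forall>t<n. m t \<ge> 2"
    and B_sub: "\<forall>\<beta>\<in>B. length \<beta> = n \<and> set \<beta> \<subseteq> {0, 1}"
    and v_in: "v \<in> neps_verts n (\<lambda>t. K_verts (m t))"
  shows "\<forall>w\<in>neps_verts n (\<lambda>t. K_verts (m t)).
    real (walks (neps_verts n (\<lambda>t. K_verts (m t))) (neps_adj n (\<lambda>t. K_adj (m t)) B) r v w)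
    = (\<Sum>bs\<in>{bs. length bs = r \<and> set bs \<subseteq> B}.
         \<Prod>t<n. aa (m t) (v ! t = w ! t) (\<Sum>j<r. bs ! j ! t))"
proof -
  let ?V = "neps_verts n (\<lambda>t. K_verts (m t))"
  let ?A = "neps_adj n (\<lambda>t. K_adj (m t)) B"
  have finV: "finite ?V"
    by (rule finite_subset[OF _ finite_lists_length_eq[of "\<Union>t<n. {0..<m t}" n]])
       (force simp: neps_verts_def K_verts_def in_set_conv_nth, simp)
  have finB: "finite B"
    by (rule finite_subset[OF _ finite_lists_length_eq[of "{0,1}" n]]) (use B_sub in auto)
  show ?thesis
  proof (induction r)
  case 0
  show ?case
  proof
    fix w assume w: "w \<in> ?V"
    have "{bs. length bs = 0 \<and> set bs \<subseteq> B} = {[]}" by auto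
    hence R: "(\<Sum>bs\<in>{bs. length bs = 0 \<and> set bs \<subseteq> B}.
         \<Prod>t<n. aa (m t) (v ! t = w ! t) (\<Sum>j<0. bs ! j ! t)) = (\<Prod>t<n. aa (m t) (v ! t = w ! t) 0)"
      by simp
    show "real (walks ?V ?A 0 v w) = (\<Sum>bs\<in>{bs. length bs = 0 \<and> set bs \<subseteq> B}.
         \<Prod>t<n. aa (m t) (v ! t = w ! t) (\<Sum>j<0. bs ! j ! t))"
      unfolding R walks_0
    proof (cases "v = w")
      case True
      thus "real (if v = w \<and> v \<in> ?V then 1 else 0) = (\<Prod>t<n. aa (m t) (v ! t = w ! t) 0)"
        using v_in m_ge by (simp add: aa_T0)
    next
      case False
      have "length v = n" "length w = n" using v_in w by (auto simp: neps_verts_def)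
      then obtain t where "t < n" "v ! t \<noteq> w ! t" using False nth_equalityI by metis
      thus "real (if v = w \<and> v \<in> ?V then 1 else 0) = (\<Prod>t<n. aa (m t) (v ! t = w ! t) 0)"
        using False by (auto simp: aa_F0 intro!: prod_zero bexI[of _ t])
    qed
  qed
next
  case (Suc r)
  show ?case
  proof
    fix w assume w: "w \<in> ?V"
    let ?BS = "\<lambda>r. {bs. length bs = r \<and> set bs \<subseteq> B}"
    let ?L = "\<lambda>bs t. \<Sum>j<r. bs ! j ! t"
    let ?F = "\<lambda>u. \<Sum>bs\<in>?BS r. \<Prod>t<n. aa (m t) (v ! t = u ! t) (?L bs t)"
    let ?pat = "\<lambda>\<beta> u. \<forall>t<n. patt (m t) (\<beta> ! t) (u ! t) (w ! t)"
    let ?g = "\<lambda>\<beta> bs t x. if patt (m t) (\<beta> ! t) x (w ! t) then aa (m t) (v ! t = x) (?L bs t) else 0"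
    have finBS: "finite (?BS r)"
      by (rule finite_subset[OF _ finite_lists_length_eq[of B r]]) (use finB in auto)
    have adj_eq: "\<And>u. ?A u w = (\<exists>\<beta>\<in>B. ?pat \<beta> u)"
      by (simp add: neps_adj_def patt_def)
    have uniq: "\<beta> = \<beta>'" if "\<beta> \<in> B" "\<beta>' \<in> B" "?pat \<beta> u" "?pat \<beta>' u" for u \<beta> \<beta>'
    proof -
      have l: "length \<beta> = n" "length \<beta>' = n" "set \<beta> \<subseteq> {0,1}" "set \<beta>' \<subseteq> {0,1}"
        using that(1,2) B_sub by auto
      show ?thesis
      proof (rule nth_equalityI)
        show "length \<beta> = length \<beta>'" using l by simp
        fix i assume "i < length \<beta>"
        hence i: "i < n" using l by simp
        have "\<beta> ! i \<in> {0,1}" by (rule subsetD[OF l(3) nth_mem]) (simp add: i l)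
        moreover have "\<beta>' ! i \<in> {0,1}" by (rule subsetD[OF l(4) nth_mem]) (simp add: i l)
        moreover have "patt (m i) (\<beta> ! i) (u ! i) (w ! i)" "patt (m i) (\<beta>' ! i) (u ! i) (w ! i)"
          using that(3,4) i by auto
        ultimately show "\<beta> ! i = \<beta>' ! i" unfolding patt_def by auto
      qed
    qed
    have pe: "(\<Prod>t<n. ?g \<beta> bs t (u ! t)) = (if ?pat \<beta> u then \<Prod>t<n. aa (m t) (v ! t = u ! t) (?L bs t) else 0)" for \<beta> bs u
      by (rule prod_if_all[symmetric])
    have "real (walks ?V ?A (Suc r) v w) = (\<Sum>u\<in>?V. if ?A u w then ?F u else 0)"
      unfolding walks_Suc[OF finV w] using Suc.IH by (intro sum.cong) auto
    also have "\<dots> = (\<Sum>u\<in>?V. \<Sum>\<beta>\<in>B. if ?pat \<beta> u then ?F u else 0)"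
      by (intro sum.cong refl, subst sum_unique_beta[OF finB]) (use uniq adj_eq in auto)
    also have "\<dots> = (\<Sum>u\<in>?V. \<Sum>\<beta>\<in>B. \<Sum>bs\<in>?BS r. \<Prod>t<n. ?g \<beta> bs t (u ! t))"
      by (intro sum.cong refl) (simp add: pe sum_if_const)
    also have "\<dots> = (\<Sum>\<beta>\<in>B. \<Sum>bs\<in>?BS r. \<Sum>u\<in>?V. \<Prod>t<n. ?g \<beta> bs t (u ! t))"
      by (subst sum.swap, rule sum.cong[OF refl], rule sum.swap)
    also have "\<dots> = (\<Sum>\<beta>\<in>B. \<Sum>bs\<in>?BS r. \<Prod>t<n. \<Sum>x\<in>{0..<m t}. ?g \<beta> bs t x)"
      by (intro sum.cong refl, subst sum_prod_neps) (simp add: K_verts_def)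
    also have "\<dots> = (\<Sum>\<beta>\<in>B. \<Sum>bs\<in>?BS r. \<Prod>t<n. aa (m t) (v ! t = w ! t) (?L bs t + \<beta> ! t))"
    proof (intro sum.cong refl prod.cong)
      fix \<beta> t assume b: "\<beta> \<in> B" and t: "t \<in> {..<n}"
      have "\<beta> ! t \<in> {0,1}" using b B_sub t nth_mem by fastforce
      moreover have "v ! t < m t" "w ! t < m t" using v_in w t by (auto simp: neps_verts_def K_verts_def)
      moreover have "m t \<ge> 2" using m_ge t by auto
      ultimately show "(\<Sum>x\<in>{0..<m t}. ?g \<beta> bs t x) = aa (m t) (v ! t = w ! t) (?L bs t + \<beta> ! t)" for bs
        by (intro scalar_step) auto
    qed
    also have "\<dots> = (\<Sum>p\<in>?BS r \<times> B. \<Prod>t<n. aa (m t) (v ! t = w ! t) (\<Sum>j<Suc r. (fst p @ [snd p]) ! j ! t))"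
    proof -
      have e: "(\<Sum>j<Suc r. (bs @ [\<beta>]) ! j ! t) = ?L bs t + \<beta> ! t" if "bs \<in> ?BS r" for bs \<beta> t
        using that by (simp add: nth_append)
      have e2: "(\<Sum>j<length a. (a @ [b]) ! j ! t) = (\<Sum>j<length a. a ! j ! t)" for a b t
        by (intro sum.cong) (auto simp: nth_append)
      show ?thesis
        by (subst sum.swap, subst sum.cartesian_product, intro sum.cong refl)
           (auto simp: e e2)
    qed
    also have "\<dots> = (\<Sum>bs\<in>?BS (Suc r). \<Prod>t<n. aa (m t) (v ! t = w ! t) (\<Sum>j<Suc r. bs ! j ! t))"
    proof -
      have "?BS (Suc r) = (\<lambda>p. fst p @ [snd p]) ` (?BS r \<times> B)"
      proof (intro set_eqI iffI)
        fix bs assume "bs \<in> ?BS (Suc r)"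
        then obtain ys y where "bs = ys @ [y]" "length ys = r" "set ys \<subseteq> B" "y \<in> B"
          by (auto simp: length_Suc_conv_rev)
        thus "bs \<in> (\<lambda>p. fst p @ [snd p]) ` (?BS r \<times> B)"
          by (intro image_eqI[of _ _ "(ys, y)"]) auto
      qed auto
      moreover have "inj_on (\<lambda>p. fst p @ [snd p]) (?BS r \<times> B)"
        by (auto simp: inj_on_def)
      ultimately show ?thesis by (simp add: sum.reindex)
    qed
    finally show "real (walks ?V ?A (Suc r) v w) = (\<Sum>bs\<in>?BS (Suc r). \<Prod>t<n. aa (m t) (v ! t = w ! t) (\<Sum>j<Suc r. bs ! j ! t))" .
  qed
qed
qed

theorem corollary3p2:
  fixes n :: nat and m :: "nat \<Rightarrow> nat" and B :: "nat list set"
    and v w :: "nat list" and r :: nat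
  assumes m_ge: "\<forall>t<n. m t \<ge> 2"
    and B_sub: "\<forall>\<beta>\<in>B. length \<beta> = n \<and> set \<beta> \<subseteq> {0, 1}"
    and v_in: "v \<in> neps_verts n (\<lambda>t. K_verts (m t))"
    and w_in: "w \<in> neps_verts n (\<lambda>t. K_verts (m t))"
  shows "real (walks (neps_verts n (\<lambda>t. K_verts (m t))) (neps_adj n (\<lambda>t. K_adj (m t)) B) r v w)
    = (\<Sum>bs\<in>{bs. length bs = r \<and> set bs \<subseteq> B}.
         \<Prod>t\<in>{0..<n}.
           (let l = int (\<Sum>j<r. bs ! j ! t); mt = real (m t) in
            if v ! t = w ! t
            then (mt - 1) / mt * ((mt - 1) powi (l - 1) - (-1) powi (l - 1))
            else 1 / mt * ((mt - 1) powi l - (-1) powi l)))"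
proof -
  have "real (walks (neps_verts n (\<lambda>t. K_verts (m t))) (neps_adj n (\<lambda>t. K_adj (m t)) B) r v w)
    = (\<Sum>bs\<in>{bs. length bs = r \<and> set bs \<subseteq> B}.
         \<Prod>t<n. aa (m t) (v ! t = w ! t) (\<Sum>j<r. bs ! j ! t))"
    using main_ind[OF m_ge B_sub v_in] w_in by blast
  thus ?thesis unfolding aa_def atLeast0LessThan .
qed

end
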